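(* Let $G$ be a graph that has an EPG-representation in a grid with $h$ rows in which every grid-edge is used by at most $c$ vertex-paths. Then the pathwidth of $G$ satisfies $pw(G)\le c(3h-1)-1$.
   Context: The $w\times h$-grid consists of all grid-points $(i,j)$ with integer coordinates $1\le i\le w$, $1\le j\le h$ (so it has $h$ rows), and all grid-edges joining grid-points at distance $1$. An EPG-representation of a graph $G$ assigns to each vertex $v$ a path $\mathrm{path}(v)$ in the grid such that $(v,w)$ is an edge of $G$ if and only if $\mathrm{path}(v)$ and $\mathrm{path}(w)$ share a grid-edge. The pathwidth $pw(G)$ is the smallest $k$ such that $G$ is a subgraph of a $(k+1)$-colourable interval graph (an interval graph is the intersection graph of a family of closed intervals of the real line). *)

theory Defs
  imports Complex_Main
begin

definition graph :: "'a set \<Rightarrow> 'a set set \<Rightarrow> bool" where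
  "graph V E \<longleftrightarrow> finite V \<and> (\<forall>e\<in>E. \<exists>u v. e = {u, v} \<and> u \<noteq> v \<and> u \<in> V \<and> v \<in> V)"

definition grid_point :: "nat \<Rightarrow> nat \<Rightarrow> nat \<times> nat \<Rightarrow> bool" where
  "grid_point w h p \<longleftrightarrow> 1 \<le> fst p \<and> fst p \<le> w \<and> 1 \<le> snd p \<and> snd p \<le> h"

definition grid_adj :: "nat \<times> nat \<Rightarrow> nat \<times> nat \<Rightarrow> bool" where
  "grid_adj p q \<longleftrightarrow>
     (fst p = fst q \<and> (snd p = snd q + 1 \<or> snd q = snd p + 1)) \<or>
     (snd p = snd q \<and> (fst p = fst q + 1 \<or> fst q = fst p + 1))"

definition grid_path :: "nat \<Rightarrow> nat \<Rightarrow> (nat \<times> nat) list \<Rightarrow> bool" where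
  "grid_path w h ps \<longleftrightarrow> ps \<noteq> [] \<and> distinct ps \<and> (\<forall>p\<in>set ps. grid_point w h p) \<and>
     (\<forall>i. i + 1 < length ps \<longrightarrow> grid_adj (ps ! i) (ps ! (i + 1)))"

definition path_edges :: "(nat \<times> nat) list \<Rightarrow> (nat \<times> nat) set set" where
  "path_edges ps = {{ps ! i, ps ! (i + 1)} | i. i + 1 < length ps}"

definition EPG_rep ::
  "'a set \<Rightarrow> 'a set set \<Rightarrow> nat \<Rightarrow> nat \<Rightarrow> ('a \<Rightarrow> (nat \<times> nat) list) \<Rightarrow> bool" where
  "EPG_rep V E w h P \<longleftrightarrow> (\<forall>v\<in>V. grid_path w h (P v)) \<and>
     (\<forall>u\<in>V. \<forall>v\<in>V. u \<noteq> v \<longrightarrow> ({u, v} \<in> E \<longleftrightarrow> path_edges (P u) \<inter> path_edges (P v) \<noteq> {}))"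

definition edge_load_le :: "'a set \<Rightarrow> ('a \<Rightarrow> (nat \<times> nat) list) \<Rightarrow> nat \<Rightarrow> bool" where
  "edge_load_le V P c \<longleftrightarrow> (\<forall>e. card {v\<in>V. e \<in> path_edges (P v)} \<le> c)"

definition interval_graph_edges :: "'a set \<Rightarrow> ('a \<Rightarrow> real) \<Rightarrow> ('a \<Rightarrow> real) \<Rightarrow> 'a set set" where
  "interval_graph_edges V l r =
     {{u, v} | u v. u \<in> V \<and> v \<in> V \<and> u \<noteq> v \<and> {l u..r u} \<inter> {l v..r v} \<noteq> {}}"

definition colourable :: "'a set \<Rightarrow> 'a set set \<Rightarrow> nat \<Rightarrow> bool" where
  "colourable V E k \<longleftrightarrow> (\<exists>f. (\<forall>v\<in>V. f v < k) \<and> (\<forall>u\<in>V. \<forall>v\<in>V. {u, v} \<in> E \<longrightarrow> u \<noteq> v \<longrightarrow> f u \<noteq> f v))"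

text \<open>It suffices (and is
  equivalent) to consider interval graphs on the vertex set of G, since induced
  subgraphs of interval graphs are interval graphs.\<close>
definition pw_le :: "'a set \<Rightarrow> 'a set set \<Rightarrow> nat \<Rightarrow> bool" where
  "pw_le V E k \<longleftrightarrow> (\<exists>l r. (\<forall>v\<in>V. l v \<le> r v) \<and> E \<subseteq> interval_graph_edges V l r \<and>
      colourable V (interval_graph_edges V l r) (k + 1))"

definition pathwidth :: "'a set \<Rightarrow> 'a set set \<Rightarrow> nat" where
  "pathwidth V E = (LEAST k. pw_le V E k)"

end

theory Submission
  imports Defs
begin


lemma colour_aux:
  fixes l r :: "'a \<Rightarrow> real"
  assumes fin: "finite S" and sub: "S \<subseteq> V" and lr: "\<forall>v\<in>V. l v \<le> r v"
    and cnt: "\<forall>v\<in>V. card {u\<in>V. l u \<le> l v \<and> l v \<le> r u} \<le> k" and finV: "finite V"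
  shows "\<exists>f. (\<forall>v\<in>S. f v < k) \<and> (\<forall>u\<in>S. \<forall>v\<in>S. u \<noteq> v \<longrightarrow> {l u..r u} \<inter> {l v..r v} \<noteq> {} \<longrightarrow> f u \<noteq> (f v::nat))"
  using fin sub
proof (induction S rule: finite_ranking_induct[where f = l])
  case empty
  then show ?case by auto
next
  case (insert x S)
  then obtain g where g: "\<forall>v\<in>S. g v < k" "\<forall>u\<in>S. \<forall>v\<in>S. u \<noteq> v \<longrightarrow> {l u..r u} \<inter> {l v..r v} \<noteq> {} \<longrightarrow> g u \<noteq> g v"
    by auto
  show ?case
  proof (cases "x \<in> S")
    case True
    then show ?thesis using g by (metis insert_absorb)
  next
    case False
    define N where "N = {y\<in>S. {l y..r y} \<inter> {l x..r x} \<noteq> {}}"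
    have xV: "x \<in> V" using insert by auto
    have NA: "insert x N \<subseteq> {u\<in>V. l u \<le> l x \<and> l x \<le> r u}"
    proof
      fix y assume "y \<in> insert x N"
      then show "y \<in> {u\<in>V. l u \<le> l x \<and> l x \<le> r u}"
      proof
        assume "y = x" then show ?thesis using xV lr by auto
      next
        assume yN: "y \<in> N"
        then have "y \<in> S" "l y \<le> l x" using insert N_def by auto
        moreover from yN obtain t where "l y \<le> t" "t \<le> r y" "l x \<le> t" using N_def by auto
        ultimately show ?thesis using insert by auto
      qed
    qed
    have finN: "finite N" using insert N_def by auto
    have "finite {u\<in>V. l u \<le> l x \<and> l x \<le> r u}" using finV by simp
    then have "card (insert x N) \<le> card {u\<in>V. l u \<le> l x \<and> l x \<le> r u}" using NA by (rule card_mono)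
    then have "card (insert x N) \<le> k" using cnt xV by (meson order_trans)
    then have cN: "card N < k" using finN False N_def by (simp add: card_insert_if)
    have "card (g ` N) < k" using card_image_le[OF finN, of g] cN by linarith
    then have "\<not> {0..<k} \<subseteq> g ` N"
    proof (intro notI)
      assume "{0..<k} \<subseteq> g ` N"
      then have "card {0..<k} \<le> card (g ` N)" using finN by (intro card_mono) auto
      then show False using \<open>card (g ` N) < k\<close> by simp
    qed
    then obtain c where c0: "c \<in> {0..<k}" "c \<notin> g ` N" by blast
    then have c: "c < k" "c \<notin> g ` N" by auto
    define g' where "g' = g(x := c)"
    have "\<forall>v\<in>insert x S. g' v < k" using g c g'_def by auto
    moreover have "\<forall>u\<in>insert x S. \<forall>v\<in>insert x S. u \<noteq> v \<longrightarrow> {l u..r u} \<inter> {l v..r v} \<noteq> {} \<longrightarrow> g' u \<noteq> g' v"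
    proof (intro ballI impI)
      fix u v assume uv: "u \<in> insert x S" "v \<in> insert x S" "u \<noteq> v" "{l u..r u} \<inter> {l v..r v} \<noteq> {}"
      show "g' u \<noteq> g' v"
      proof (cases "u = x")
        case True
        then have "v \<in> S" "v \<noteq> x" using uv by auto
        then have "v \<in> N" using uv True unfolding N_def by (simp add: Int_commute)
        then show ?thesis using True c \<open>v \<noteq> x\<close> unfolding g'_def by auto
      next
        case ux: False
        show ?thesis
        proof (cases "v = x")
          case True
          then have "u \<in> N" using uv ux unfolding N_def by simp
          then show ?thesis using True c ux unfolding g'_def by auto
        next
          case False
          then show ?thesis using ux uv g unfolding g'_def by simp
        qed
      qed
    qed
    ultimately show ?thesis by blast
  qed
qed

lemma colour_lemma:
  fixes l r :: "'a \<Rightarrow> real"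
  assumes lr: "\<forall>v\<in>V. l v \<le> r v"
    and cnt: "\<forall>v\<in>V. card {u\<in>V. l u \<le> l v \<and> l v \<le> r u} \<le> k" and finV: "finite V"
  shows "colourable V (interval_graph_edges V l r) k"
proof -
  obtain f where f: "\<forall>v\<in>V. f v < k" "\<forall>u\<in>V. \<forall>v\<in>V. u \<noteq> v \<longrightarrow> {l u..r u} \<inter> {l v..r v} \<noteq> {} \<longrightarrow> f u \<noteq> (f v::nat)"
    using colour_aux[OF finV subset_refl lr cnt finV] by blast
  show ?thesis unfolding colourable_def
  proof (intro exI[of _ f] conjI ballI impI)
    fix v assume "v \<in> V" then show "f v < k" using f by auto
  next
    fix u v assume uv: "u \<in> V" "v \<in> V" "{u, v} \<in> interval_graph_edges V l r" "u \<noteq> v"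
    then obtain u' v' where "{u,v} = {u',v'}" "{l u'..r u'} \<inter> {l v'..r v'} \<noteq> {}"
      unfolding interval_graph_edges_def by auto
    then have "{l u..r u} \<inter> {l v..r v} \<noteq> {}" by (metis Int_commute doubleton_eq_iff)
    then show "f u \<noteq> f v" using f uv by auto
  qed
qed


lemma discrete_ivt:
  fixes f :: "nat \<Rightarrow> nat"
  assumes "\<forall>i. i < n \<longrightarrow> f (Suc i) \<le> f i + 1 \<and> f i \<le> f (Suc i) + 1"
  shows "a \<le> n \<Longrightarrow> b \<le> n \<Longrightarrow> f a \<le> x \<Longrightarrow> x \<le> f b \<Longrightarrow> \<exists>j\<le>n. f j = x"
  using assms
proof (induction n arbitrary: a b)
  case 0
  then show ?case by auto
next
  case (Suc n)
  have H: "\<forall>i. i < n \<longrightarrow> f (Suc i) \<le> f i + 1 \<and> f i \<le> f (Suc i) + 1" using Suc.prems(5) by auto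
  have st: "f (Suc n) \<le> f n + 1" "f n \<le> f (Suc n) + 1" using Suc.prems(5) by auto
  have IH: "\<exists>j\<le>Suc n. f j = x" if hyp: "a' \<le> n" "b' \<le> n" "f a' \<le> x" "x \<le> f b'" for a' b'
  proof -
    obtain j where "j \<le> n" "f j = x" using Suc.IH[OF hyp H] by blast
    then show ?thesis by (intro exI[of _ j]) auto
  qed
  show ?case
  proof (cases "a \<le> n")
    case a: True
    show ?thesis
    proof (cases "b \<le> n")
      case True then show ?thesis using IH a Suc.prems by blast
    next
      case False
      then have b: "b = Suc n" using Suc.prems(2) by simp
      show ?thesis
      proof (cases "x \<le> f n")
        case True then show ?thesis using IH[of a n] a Suc.prems by blast
      next
        case False then have "f (Suc n) = x" using st Suc.prems(4) b by simp
        then show ?thesis by blast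
      qed
    qed
  next
    case False
    then have a: "a = Suc n" using Suc.prems(1) by simp
    show ?thesis
    proof (cases "f n \<le> x")
      case True
      show ?thesis
      proof (cases "b \<le> n")
        case True then show ?thesis using IH[of n b] \<open>f n \<le> x\<close> Suc.prems by blast
      next
        case False then have "b = Suc n" using Suc.prems(2) by simp
        then show ?thesis using a Suc.prems by (intro exI[of _ "Suc n"]) simp
      qed
    next
      case False then have "f (Suc n) = x" using st Suc.prems(3) a by simp
      then show ?thesis by blast
    qed
  qed
qed


definition ExC :: "nat \<Rightarrow> nat \<Rightarrow> (nat \<times> nat) set set" where
  "ExC x h = (\<lambda>y. {(x,y),(x,y+1)}) ` {1..<h} \<union> (\<lambda>y. {(x-1,y),(x,y)}) ` {1..h}
     \<union> (\<lambda>y. {(x,y),(x+1,y)}) ` {1..h}"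

lemma card_Ex: "card (ExC x h) \<le> 3*h - 1"
proof -
  have "card (ExC x h) \<le> card ((\<lambda>y. {(x,y),(x,y+1)}) ` {1..<h} \<union> (\<lambda>y. {(x-1,y),(x,y)}) ` {1..h})
     + card ((\<lambda>y. {(x,y),(x+1,y)}) ` {1..h})" unfolding ExC_def by (rule card_Un_le)
  also have "\<dots> \<le> card ((\<lambda>y. {(x,y),(x,y+1)}) ` {1..<h}) + card ((\<lambda>y. {(x-1,y),(x,y)}) ` {1..h})
     + card ((\<lambda>y. {(x,y),(x+1,y)}) ` {1..h})" using card_Un_le by (meson add_le_mono1)
  also have "\<dots> \<le> card {1..<h} + card {1..h} + card {1..h}"
    by (intro add_mono card_image_le) auto
  also have "\<dots> = 3*h - 1" by simp
  finally show ?thesis .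
qed

lemma finite_Ex: "finite (ExC x h)" unfolding ExC_def by auto

lemma edge_in_Ex:
  assumes "grid_point w h p" "grid_point w h q" "grid_adj p q" "fst p = x"
  shows "{p,q} \<in> ExC x h"
proof -
  obtain y where p: "p = (x,y)" using assms(4) by (metis prod.collapse)
  obtain a b where q: "q = (a,b)" by fastforce
  have y: "1 \<le> y" "y \<le> h" and ab: "1 \<le> a" "1 \<le> b" "b \<le> h"
    using assms(1,2) p q unfolding grid_point_def by auto
  from assms(3) consider "a = x" "y = b + 1" | "a = x" "b = y + 1" | "b = y" "x = a + 1" | "b = y" "a = x + 1"
    unfolding grid_adj_def p q by auto
  then show ?thesis
  proof cases
    case 1
    then have "{p,q} = (\<lambda>y. {(x,y),(x,y+1)}) b" "b \<in> {1..<h}" using p q y ab by auto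
    then show ?thesis unfolding ExC_def by blast
  next
    case 2
    then have "{p,q} = (\<lambda>y. {(x,y),(x,y+1)}) y" "y \<in> {1..<h}" using p q y ab by auto
    then show ?thesis unfolding ExC_def by blast
  next
    case 3
    then have "{p,q} = (\<lambda>y. {(x-1,y),(x,y)}) y" "y \<in> {1..h}" using p q y ab by auto
    then show ?thesis unfolding ExC_def by blast
  next
    case 4
    then have "{p,q} = (\<lambda>y. {(x,y),(x+1,y)}) y" "y \<in> {1..h}" using p q y ab by auto
    then show ?thesis unfolding ExC_def by blast
  qed
qed

lemma col_lemma:
  assumes gp: "grid_path w h ps" and len: "length ps \<ge> 2"
    and mn: "Min (fst ` set ps) \<le> x" and mx: "x \<le> Max (fst ` set ps)"
  shows "\<exists>e\<in>ExC x h. e \<in> path_edges ps"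
proof -
  have ne: "fst ` set ps \<noteq> {}" using len by auto
  have "Min (fst ` set ps) \<in> fst ` set ps" using ne by (intro Min_in) auto
  then obtain a where a: "a < length ps" "fst (ps ! a) = Min (fst ` set ps)"
    by (metis imageE in_set_conv_nth)
  have "Max (fst ` set ps) \<in> fst ` set ps" using ne by (intro Max_in) auto
  then obtain b where b: "b < length ps" "fst (ps ! b) = Max (fst ` set ps)"
    by (metis imageE in_set_conv_nth)
  have adj: "\<forall>i. i + 1 < length ps \<longrightarrow> grid_adj (ps ! i) (ps ! (i + 1))"
    and pts: "\<forall>p\<in>set ps. grid_point w h p" using gp unfolding grid_path_def by auto
  have st: "\<forall>i. i < length ps - 1 \<longrightarrow> fst (ps ! Suc i) \<le> fst (ps ! i) + 1 \<and> fst (ps ! i) \<le> fst (ps ! Suc i) + 1"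
  proof (intro allI impI)
    fix i assume "i < length ps - 1"
    then have "grid_adj (ps ! i) (ps ! (i + 1))" using adj by auto
    then show "fst (ps ! Suc i) \<le> fst (ps ! i) + 1 \<and> fst (ps ! i) \<le> fst (ps ! Suc i) + 1"
      unfolding grid_adj_def by auto
  qed
  have "a \<le> length ps - 1" "b \<le> length ps - 1" using a b by auto
  then have "\<exists>j\<le>length ps - 1. fst (ps ! j) = x"
    using discrete_ivt[where f = "\<lambda>i. fst (ps ! i)", OF st, of a b x] a b mn mx by auto
  then obtain j where j: "j \<le> length ps - 1" "fst (ps ! j) = x" by blast
  show ?thesis
  proof (cases "j + 1 < length ps")
    case True
    have "{ps ! j, ps ! (j+1)} \<in> ExC x h"
      using edge_in_Ex[of w h "ps ! j" "ps ! (j+1)" x] True adj pts j by auto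
    moreover have "{ps ! j, ps ! (j+1)} \<in> path_edges ps" unfolding path_edges_def using True by blast
    ultimately show ?thesis by blast
  next
    case False
    then have jj: "j = (j - 1) + 1" "j < length ps" using j len by auto
    have ad: "grid_adj (ps ! (j-1)) (ps ! j)" using adj[rule_format, of "j-1"] jj by simp
    have ad2: "grid_adj (ps ! j) (ps ! (j-1))" using ad unfolding grid_adj_def by auto
    have "ps ! j \<in> set ps" "ps ! (j-1) \<in> set ps" using jj by auto
    then have "grid_point w h (ps ! j)" "grid_point w h (ps ! (j-1))" using pts by auto
    then have "{ps ! j, ps ! (j-1)} \<in> ExC x h"
      using edge_in_Ex[of w h "ps ! j" "ps ! (j-1)" x] ad2 j by auto
    moreover have "{ps ! (j-1), ps ! (j-1+1)} \<in> path_edges ps" unfolding path_edges_def using jj by auto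
    ultimately show ?thesis using jj by (metis insert_commute)
  qed
qed

theorem theorem6:
  fixes V :: "'a set" and E :: "'a set set" and w h c :: nat
    and P :: "'a \<Rightarrow> (nat \<times> nat) list"
  assumes "graph V E"
    and "EPG_rep V E w h P"
    and "edge_load_le V P c"
    and "c \<ge> 1"
  shows "pathwidth V E \<le> c * (3 * h - 1) - 1"
proof -
  have finV: "finite V" using assms(1) unfolding graph_def by auto
  have Eedge: "\<forall>e\<in>E. \<exists>u v. e = {u, v} \<and> u \<noteq> v \<and> u \<in> V \<and> v \<in> V"
    using assms(1) unfolding graph_def by auto
  have gp: "\<And>v. v \<in> V \<Longrightarrow> grid_path w h (P v)" using assms(2) unfolding EPG_rep_def by auto
  have rep: "\<And>u v. u \<in> V \<Longrightarrow> v \<in> V \<Longrightarrow> u \<noteq> v \<Longrightarrow> {u, v} \<in> E \<Longrightarrow> path_edges (P u) \<inter> path_edges (P v) \<noteq> {}"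
    using assms(2) unfolding EPG_rep_def by auto
  have load: "\<And>e. card {v\<in>V. e \<in> path_edges (P v)} \<le> c" using assms(3) unfolding edge_load_le_def by auto
  show ?thesis
  proof (cases "h = 0")
    case True
    have "V = {}"
    proof (rule ccontr)
      assume "V \<noteq> {}"
      then obtain v where v: "v \<in> V" by auto
      then have "P v \<noteq> []" "\<forall>p\<in>set (P v). grid_point w h p" using gp unfolding grid_path_def by auto
      then have "grid_point w h (hd (P v))" by auto
      then show False using True unfolding grid_point_def by linarith
    qed
    then have "E = {}" using Eedge by auto
    have "pw_le V E 0" unfolding pw_le_def colourable_def interval_graph_edges_def
      using \<open>V = {}\<close> \<open>E = {}\<close> by auto
    then have "pathwidth V E \<le> 0" unfolding pathwidth_def by (rule Least_le)
    then show ?thesis by simp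
  next
    case False
    define k where "k = c * (3 * h - 1)"
    have h2: "2 \<le> 3*h-1" using False by simp
    have "1 * 2 \<le> c * (3*h-1)" by (rule mult_le_mono[OF assms(4) h2])
    then have k2: "k \<ge> 2" unfolding k_def by simp
    obtain idx :: "'a \<Rightarrow> nat" where idx: "inj_on idx V"
      using finite_imp_inj_to_nat_seg[OF finV] by blast
    define long where "long v \<longleftrightarrow> length (P v) \<ge> 2" for v
    define mn where "mn v = Min (fst ` set (P v))" for v
    define mx where "mx v = Max (fst ` set (P v))" for v
    define l where "l v = (if long v then real (mn v) else - real (idx v) - 1)" for v
    define r where "r v = (if long v then real (mx v) else - real (idx v) - 1)" for v
    have mnmx: "mn v \<le> fst p \<and> fst p \<le> mx v" if "p \<in> set (P v)" for v p
      unfolding mn_def mx_def using that by auto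
    have lr: "\<forall>v\<in>V. l v \<le> r v"
    proof
      fix v assume "v \<in> V"
      show "l v \<le> r v"
      proof (cases "long v")
        case True
        then have "P v ! 0 \<in> set (P v)" unfolding long_def by (intro nth_mem) linarith
        then obtain p where "p \<in> set (P v)" by blast
        then show ?thesis using True mnmx[of p v] unfolding l_def r_def by auto
      qed (simp add: l_def r_def)
    qed
    have pe_long: "long v" if "e \<in> path_edges (P v)" for e v
      using that unfolding path_edges_def long_def by auto
    have pe_pt: "\<exists>p\<in>e. p \<in> set (P v)" if "e \<in> path_edges (P v)" for e v
      using that unfolding path_edges_def by auto
    have pe_all: "\<forall>p\<in>e. p \<in> set (P v)" if "e \<in> path_edges (P v)" for e v
      using that unfolding path_edges_def by auto
    have Esub: "E \<subseteq> interval_graph_edges V l r"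
    proof
      fix e assume "e \<in> E"
      then obtain u v where uv: "e = {u, v}" "u \<noteq> v" "u \<in> V" "v \<in> V" using Eedge by blast
      then obtain f where f: "f \<in> path_edges (P u)" "f \<in> path_edges (P v)" using rep \<open>e \<in> E\<close> by blast
      obtain p where p: "p \<in> f" "p \<in> set (P u)" using pe_pt[OF f(1)] by blast
      have "p \<in> set (P v)" using pe_all[OF f(2)] p by auto
      then have "real (fst p) \<in> {l u..r u} \<inter> {l v..r v}"
        using mnmx[of p u] mnmx[of p v] p pe_long[OF f(1)] pe_long[OF f(2)] unfolding l_def r_def by auto
      then show "e \<in> interval_graph_edges V l r" unfolding interval_graph_edges_def using uv by blast
    qed
    have cnt: "\<forall>v\<in>V. card {u\<in>V. l u \<le> l v \<and> l v \<le> r u} \<le> k"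
    proof
      fix v assume vV: "v \<in> V"
      show "card {u\<in>V. l u \<le> l v \<and> l v \<le> r u} \<le> k"
      proof (cases "long v")
        case False
        have "{u\<in>V. l u \<le> l v \<and> l v \<le> r u} \<subseteq> {v}"
        proof
          fix u assume u: "u \<in> {u\<in>V. l u \<le> l v \<and> l v \<le> r u}"
          show "u \<in> {v}"
          proof (cases "long u")
            case True
            then show ?thesis using u False unfolding l_def r_def by auto
          next
            case nl: False
            then have "idx u = idx v" using u False unfolding l_def r_def by auto
            then show ?thesis using idx u vV by (auto dest: inj_onD)
          qed
        qed
        then have "card {u\<in>V. l u \<le> l v \<and> l v \<le> r u} \<le> card {v}" by (intro card_mono) auto
        then show ?thesis using k2 by simp
      next
        case True
        define x where "x = mn v"
        have sub: "{u\<in>V. l u \<le> l v \<and> l v \<le> r u} \<subseteq> (\<Union>e\<in>ExC x h. {u\<in>V. e \<in> path_edges (P u)})"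
        proof
          fix u assume u: "u \<in> {u\<in>V. l u \<le> l v \<and> l v \<le> r u}"
          have lu: "long u"
          proof (rule ccontr)
            assume "\<not> long u"
            then show False using u True unfolding l_def r_def by auto
          qed
          then have "mn u \<le> x" "x \<le> mx u" using u True unfolding l_def r_def x_def by auto
          then obtain e where "e \<in> ExC x h" "e \<in> path_edges (P u)"
            using col_lemma[OF gp, of u x] lu u unfolding long_def mn_def mx_def by auto
          then show "u \<in> (\<Union>e\<in>ExC x h. {u\<in>V. e \<in> path_edges (P u)})" using u by blast
        qed
        have "card {u\<in>V. l u \<le> l v \<and> l v \<le> r u} \<le> card (\<Union>e\<in>ExC x h. {u\<in>V. e \<in> path_edges (P u)})"
          using sub finV by (intro card_mono) (auto intro: finite_subset[of _ V])
        also have "\<dots> \<le> (\<Sum>e\<in>ExC x h. card {u\<in>V. e \<in> path_edges (P u)})"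
          by (rule card_UN_le[OF finite_Ex])
        also have "\<dots> \<le> card (ExC x h) * c"
          using sum_bounded_above[of "ExC x h" "\<lambda>e. card {u\<in>V. e \<in> path_edges (P u)}" c] load by auto
        also have "\<dots> \<le> (3*h - 1) * c" using card_Ex by (intro mult_right_mono) auto
        finally show ?thesis unfolding k_def by (simp add: mult.commute)
      qed
    qed
    have "colourable V (interval_graph_edges V l r) k" by (rule colour_lemma[OF lr cnt finV])
    then have "pw_le V E (k - 1)" unfolding pw_le_def using lr Esub k2
      by (intro exI[of _ l] exI[of _ r]) auto
    then have "pathwidth V E \<le> k - 1" unfolding pathwidth_def by (rule Least_le)
    then show ?thesis unfolding k_def .
  qed
qed

end
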